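(* Fix the uniform prior $P$ on $\{1,\dots,n\}^T$, a nonnegative utility function $u:\mathcal{Z}\times\mathcal{H}\to\mathbb{R}_+$, an amplitude $\lambda\ge0$ and a decay $\gamma\in(0,1)$. If Adaptive Sampling SGD is run for $T$ iterations, its posterior $Q$ satisfies $$D_{KL}(Q\|P)\le\frac{\lambda}{1-\gamma}\sum_{t=1}^{T-1}\mathbb{E}_{(i_1,\dots,i_t)\sim Q}\big[u(z_{i_t},h_t)\big].$$
   Context: Adaptive Sampling SGD: inputs are examples $(z_1,\dots,z_n)\in\mathcal{Z}^n$, an initial hypothesis $h_0\in\mathcal{H}$, update rules $G_t:\mathcal{H}\times\mathcal{Z}\to\mathcal{H}$, utility $u$, amplitude $\lambda$, decay $\gamma$. Initialize weights $w_1=\dots=w_n=1$. For $t=1,\dots,T$: draw $i_t$ with conditional probability $Q(i_t=i\mid i_1,\dots,i_{t-1})=w_i/\sum_{j=1}^nw_j$; set $h_t=G_t(h_{t-1},z_{i_t})$; update $w_{i_t}\leftarrow w_{i_t}^{\gamma}\exp(\lambda u(z_{i_t},h_t))$. Output $h_T$. The posterior $Q$ is the resulting distribution of $(i_1,\dots,i_T)$ on $\{1,\dots,n\}^T$ (so $h_t$ is a function of $(i_1,\dots,i_t)$); $D_{KL}(Q\|P)=\mathbb{E}_{Q}\ln(Q/P)$. *)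

theory Defs
  imports Complex_Main
begin

text \<open>Adaptive Sampling SGD. Examples are indexed by 0..<n (shift of 1..n).
  A history is the list [i_1,...,i_t] of sampled indices. G t is the update rule G_t (t = 1..T).\<close>

fun hyp_from :: "(nat \<Rightarrow> 'z) \<Rightarrow> (nat \<Rightarrow> 'h \<Rightarrow> 'z \<Rightarrow> 'h) \<Rightarrow> nat \<Rightarrow> 'h \<Rightarrow> nat list \<Rightarrow> 'h" where
  "hyp_from z G t h [] = h"
| "hyp_from z G t h (i # is) = hyp_from z G (Suc t) (G t h (z i)) is"

definition hyp :: "(nat \<Rightarrow> 'z) \<Rightarrow> 'h \<Rightarrow> (nat \<Rightarrow> 'h \<Rightarrow> 'z \<Rightarrow> 'h) \<Rightarrow> nat list \<Rightarrow> 'h" where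
  "hyp z h0 G xs = hyp_from z G 1 h0 xs"

fun weights_from :: "(nat \<Rightarrow> 'z) \<Rightarrow> (nat \<Rightarrow> 'h \<Rightarrow> 'z \<Rightarrow> 'h) \<Rightarrow> ('z \<Rightarrow> 'h \<Rightarrow> real) \<Rightarrow> real \<Rightarrow> real
     \<Rightarrow> nat \<Rightarrow> 'h \<Rightarrow> (nat \<Rightarrow> real) \<Rightarrow> nat list \<Rightarrow> (nat \<Rightarrow> real)" where
  "weights_from z G u lam gam t h w [] = w"
| "weights_from z G u lam gam t h w (i # is) =
     (let h' = G t h (z i)
      in weights_from z G u lam gam (Suc t) h'
           (w(i := (w i) powr gam * exp (lam * u (z i) h'))) is)"

definition weights :: "(nat \<Rightarrow> 'z) \<Rightarrow> 'h \<Rightarrow> (nat \<Rightarrow> 'h \<Rightarrow> 'z \<Rightarrow> 'h) \<Rightarrow> ('z \<Rightarrow> 'h \<Rightarrow> real)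
     \<Rightarrow> real \<Rightarrow> real \<Rightarrow> nat list \<Rightarrow> (nat \<Rightarrow> real)" where
  "weights z h0 G u lam gam xs = weights_from z G u lam gam 1 h0 (\<lambda>_. 1) xs"

text \<open>Posterior probability Q(i_1,...,i_T) of a full index sequence (chain rule of the
  conditional sampling probabilities w_i / sum_j w_j).\<close>
definition postQ :: "nat \<Rightarrow> (nat \<Rightarrow> 'z) \<Rightarrow> 'h \<Rightarrow> (nat \<Rightarrow> 'h \<Rightarrow> 'z \<Rightarrow> 'h) \<Rightarrow> ('z \<Rightarrow> 'h \<Rightarrow> real)
     \<Rightarrow> real \<Rightarrow> real \<Rightarrow> nat list \<Rightarrow> real" where
  "postQ n z h0 G u lam gam xs =
     (\<Prod>t<length xs. weights z h0 G u lam gam (take t xs) (xs ! t)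
                     / (\<Sum>j<n. weights z h0 G u lam gam (take t xs) j))"

definition seqs :: "nat \<Rightarrow> nat \<Rightarrow> nat list set" where
  "seqs n T = {xs. length xs = T \<and> set xs \<subseteq> {..<n}}"

definition priorP :: "nat \<Rightarrow> nat \<Rightarrow> nat list \<Rightarrow> real" where
  "priorP n T xs = 1 / real n ^ T"

definition KL_fin :: "'a set \<Rightarrow> ('a \<Rightarrow> real) \<Rightarrow> ('a \<Rightarrow> real) \<Rightarrow> real" where
  "KL_fin S Q P = (\<Sum>x\<in>S. if Q x = 0 then 0 else Q x * ln (Q x / P x))"

end

theory Submission
  imports Defs
begin

lemma hyp_from_snoc: "hyp_from z G t h (xs @ [i]) = G (t + length xs) (hyp_from z G t h xs) (z i)"
  by (induction xs arbitrary: t h) auto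

lemma weights_from_snoc: "weights_from z G u lam gam t h w (xs @ [i]) =
  (let w' = weights_from z G u lam gam t h w xs in
   w'(i := w' i powr gam * exp (lam * u (z i) (G (t + length xs) (hyp_from z G t h xs) (z i)))))"
  by (induction xs arbitrary: t h w) (auto simp: Let_def)

lemma hyp_snoc: "hyp z h0 G (xs@[i]) = G (Suc (length xs)) (hyp z h0 G xs) (z i)"
  unfolding hyp_def by (simp add: hyp_from_snoc)

lemma weights_snoc: "weights z h0 G u lam gam (xs@[i]) =
  (weights z h0 G u lam gam xs)(i := weights z h0 G u lam gam xs i powr gam * exp (lam * u (z i) (hyp z h0 G (xs@[i]))))"
  unfolding weights_def hyp_snoc by (simp add: weights_from_snoc Let_def hyp_def)

lemma weights_ge1:
  assumes "\<And>x h. u x h \<ge> 0" "lam \<ge> 0" "gam > 0"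
  shows "weights z h0 G u lam gam xs i \<ge> 1"
proof (induction xs arbitrary: i rule: rev_induct)
  case Nil then show ?case by (simp add: weights_def)
next
  case (snoc x xs)
  let ?w = "weights z h0 G u lam gam xs x"
  have "?w powr gam \<ge> 1" using snoc[of x] assms by (simp add: ge_one_powr_ge_zero)
  moreover have "exp (lam * u (z x) (hyp z h0 G (xs@[x]))) \<ge> 1" using assms by simp
  ultimately have "?w powr gam * exp (lam * u (z x) (hyp z h0 G (xs@[x]))) \<ge> 1"
    using mult_mono[of 1 _ 1] by fastforce
  then show ?case using snoc by (simp add: weights_snoc)
qed

lemma sum_ln_upd:
  fixes f :: "nat \<Rightarrow> real"
  assumes "x < n"
  shows "(\<Sum>i<n. ln ((f(x:=v)) i)) = (\<Sum>i<n. ln (f i)) - ln (f x) + ln v"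
proof -
  have "(\<Sum>i<n. ln ((f(x:=v)) i)) = ln v + (\<Sum>i\<in>{..<n}-{x}. ln ((f(x:=v)) i))"
    using assms by (subst sum.remove[of _ x]) auto
  also have "(\<Sum>i\<in>{..<n}-{x}. ln ((f(x:=v)) i)) = (\<Sum>i\<in>{..<n}-{x}. ln (f i))"
    by (rule sum.cong) auto
  also have "\<dots> = (\<Sum>i<n. ln (f i)) - ln (f x)"
    using assms by (subst sum.remove[of "{..<n}" x]) auto
  finally show ?thesis by simp
qed

lemma weights_pos: "weights z h0 G u lam gam xs i > 0"
proof (induction xs arbitrary: i rule: rev_induct)
  case Nil then show ?case by (simp add: weights_def)
next
  case (snoc x xs)
  have "weights z h0 G u lam gam xs x > 0" using snoc by blast
  then have "weights z h0 G u lam gam xs x powr gam > 0" by simp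
  then show ?case using snoc by (simp add: weights_snoc)
qed

lemma potential:
  assumes gam1: "gam < 1" and "set ys \<subseteq> {..<n}"
  shows "(\<Sum>t<length ys. ln (weights z h0 G u lam gam (take t ys) (ys!t)))
     + (1/(1-gam)) * (\<Sum>i<n. ln (weights z h0 G u lam gam ys i))
     = lam/(1-gam) * (\<Sum>t=1..length ys. u (z (ys!(t-1))) (hyp z h0 G (take t ys)))"
  using assms(2)
proof (induction ys rule: rev_induct)
  case Nil then show ?case by (simp add: weights_def)
next
  case (snoc x ys)
  define W where "W = weights z h0 G u lam gam"
  define m where "m = length ys"
  define uu where "uu = u (z x) (hyp z h0 G (ys@[x]))"
  have xn: "x < n" using snoc by auto
  have IH: "(\<Sum>t<m. ln (W (take t ys) (ys!t))) + (1/(1-gam)) * (\<Sum>i<n. ln (W ys i))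
     = lam/(1-gam) * (\<Sum>t=1..m. u (z (ys!(t-1))) (hyp z h0 G (take t ys)))"
    using snoc by (simp add: W_def m_def)
  have A: "(\<Sum>t<length (ys@[x]). ln (W (take t (ys@[x])) ((ys@[x])!t)))
      = (\<Sum>t<m. ln (W (take t ys) (ys!t))) + ln (W ys x)"
    by (simp add: m_def nth_append)
  have B: "(\<Sum>t=1..length (ys@[x]). u (z ((ys@[x])!(t-1))) (hyp z h0 G (take t (ys@[x]))))
      = (\<Sum>t=1..m. u (z (ys!(t-1))) (hyp z h0 G (take t ys))) + uu"
  proof -
    have "(\<Sum>t=1..length (ys@[x]). u (z ((ys@[x])!(t-1))) (hyp z h0 G (take t (ys@[x]))))
      = (\<Sum>t=1..m. u (z ((ys@[x])!(t-1))) (hyp z h0 G (take t (ys@[x])))) + uu"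
      by (simp add: m_def uu_def)
    moreover have "(\<Sum>t=1..m. u (z ((ys@[x])!(t-1))) (hyp z h0 G (take t (ys@[x]))))
       = (\<Sum>t=1..m. u (z (ys!(t-1))) (hyp z h0 G (take t ys)))"
      by (rule sum.cong) (auto simp: m_def nth_append)
    ultimately show ?thesis by simp
  qed
  have wpos: "W ys x > 0" by (simp add: W_def weights_pos)
  have C: "(\<Sum>i<n. ln (W (ys@[x]) i)) = (\<Sum>i<n. ln (W ys i)) - ln (W ys x) + (gam * ln (W ys x) + lam * uu)"
    unfolding W_def weights_snoc using xn wpos
    apply (subst sum_ln_upd[OF xn])
    by (simp add: ln_mult ln_powr W_def uu_def)
  have "1/(1-gam) * (- ln (W ys x) + (gam * ln (W ys x) + lam * uu)) + ln (W ys x) = lam/(1-gam) * uu"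
    using gam1 by (simp add: field_simps)
  then show ?case unfolding W_def[symmetric] A B C using IH
    by (simp add: algebra_simps add_divide_distrib diff_divide_distrib) 
qed

lemma pointwise:
  assumes u0: "\<And>x h. u x h \<ge> 0" and lam0: "lam \<ge> 0" and g0: "0 < gam" and g1: "gam < 1"
    and xs: "xs \<in> seqs n T"
  shows "(if postQ n z h0 G u lam gam xs = 0 then 0
          else postQ n z h0 G u lam gam xs * ln (postQ n z h0 G u lam gam xs / priorP n T xs))
     \<le> postQ n z h0 G u lam gam xs * (lam / (1 - gam) *
        (\<Sum>t=1..T-1. u (z (xs ! (t - 1))) (hyp z h0 G (take t xs))))"
proof -
  define W where "W = weights z h0 G u lam gam"
  define Q where "Q = postQ n z h0 G u lam gam xs"
  define S where "S = (\<Sum>t=1..T-1. u (z (xs ! (t - 1))) (hyp z h0 G (take t xs)))"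
  have len: "length xs = T" and sub: "set xs \<subseteq> {..<n}" using xs by (auto simp: seqs_def)
  have Wpos: "\<And>ys i. W ys i > 0" by (simp add: W_def weights_pos)
  have Wge: "\<And>ys i. W ys i \<ge> 1" unfolding W_def by (rule weights_ge1[OF u0 lam0 g0])
  have S0: "S \<ge> 0" unfolding S_def using u0 by (simp add: sum_nonneg)
  have c0: "lam / (1 - gam) \<ge> 0" using lam0 g1 by simp
  have Qdef: "Q = (\<Prod>t<T. W (take t xs) (xs ! t) / (\<Sum>j<n. W (take t xs) j))"
    unfolding Q_def postQ_def W_def len ..
  have Q0: "Q \<ge> 0" unfolding Qdef using Wpos
    by (intro prod_nonneg divide_nonneg_nonneg sum_nonneg) (auto intro: less_imp_le)
  show ?thesis
  proof (cases "Q = 0")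
    case True then show ?thesis by (simp add: Q_def)
  next
    case False
    then have Qp: "Q > 0" using Q0 by simp
    show ?thesis
    proof (cases T)
      case 0
      then have "xs = []" using len by simp
      then show ?thesis using 0 by (simp add: postQ_def priorP_def)
    next
      case (Suc T')
      then obtain ys x where xsd: "xs = ys @ [x]" using len
        by (metis length_0_conv nat.distinct(1) rev_exhaust)
      have xn: "x < n" using sub xsd by auto
      then have npos: "n > 0" by simp
      have lys: "length ys = T'" using len xsd Suc by simp
      have Wsum: "\<And>ys. (\<Sum>j<n. W ys j) \<ge> real n"
      proof -
        fix ys
        have "(\<Sum>j<n. (1::real)) \<le> (\<Sum>j<n. W ys j)" by (rule sum_mono) (rule Wge)
        then show "(\<Sum>j<n. W ys j) \<ge> real n" by simp
      qed
      have Wsp: "\<And>ys. (\<Sum>j<n. W ys j) > 0" using Wsum npos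
        by (meson of_nat_0_less_iff order_less_le_trans)
      have "Q / priorP n T xs = Q * real n ^ T" by (simp add: priorP_def)
      also have "\<dots> = (\<Prod>t<T. real n * W (take t xs) (xs ! t) / (\<Sum>j<n. W (take t xs) j))"
      proof -
        have "(\<Prod>t<T. real n * W (take t xs) (xs ! t) / (\<Sum>j<n. W (take t xs) j))
            = (\<Prod>t<T. real n * (W (take t xs) (xs ! t) / (\<Sum>j<n. W (take t xs) j)))" by simp
        also have "\<dots> = real n ^ T * Q" unfolding Qdef prod.distrib by simp
        finally show ?thesis by simp
      qed
      finally have QP: "Q / priorP n T xs = \<dots>" .
      have "ln (Q / priorP n T xs) = (\<Sum>t<T. ln (real n * W (take t xs) (xs ! t) / (\<Sum>j<n. W (take t xs) j)))"
        unfolding QP using Wpos Wsp npos by (subst ln_prod) (auto simp: less_imp_neq[symmetric])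
      also have "\<dots> \<le> (\<Sum>t<T. ln (W (take t xs) (xs ! t)))"
      proof (rule sum_mono)
        fix t
        have a: "W (take t xs) (xs ! t) > 0" by (rule Wpos)
        have "real n * W (take t xs) (xs ! t) / (\<Sum>j<n. W (take t xs) j) \<le> W (take t xs) (xs ! t)"
          using Wsum[of "take t xs"] Wsp[of "take t xs"] a
          by (simp add: divide_le_eq mult_right_mono mult.commute)
        then show "ln (real n * W (take t xs) (xs ! t) / (\<Sum>j<n. W (take t xs) j)) \<le> ln (W (take t xs) (xs ! t))"
          using a Wsp[of "take t xs"] npos by (subst ln_le_cancel_iff) auto
      qed
      finally have L1: "ln (Q / priorP n T xs) \<le> (\<Sum>t<T. ln (W (take t xs) (xs ! t)))" .
      have pot: "(\<Sum>t<T. ln (W (take t xs) (xs ! t))) + (1/(1-gam)) * (\<Sum>i<n. ln (W xs i))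
         = lam/(1-gam) * (\<Sum>t=1..T. u (z (xs!(t-1))) (hyp z h0 G (take t xs)))"
        using potential[OF g1 sub, of z h0 G u lam] len by (simp add: W_def)
      have U: "(\<Sum>t=1..T. u (z (xs!(t-1))) (hyp z h0 G (take t xs))) = S + u (z x) (hyp z h0 G xs)"
        unfolding S_def using Suc xsd lys by (simp add: nth_append)
      have "ln (W xs x) = gam * ln (W ys x) + lam * u (z x) (hyp z h0 G xs)"
        unfolding xsd W_def weights_snoc using weights_pos[of z h0 G u lam gam ys x]
        by (simp add: ln_mult ln_powr)
      moreover have "ln (W ys x) \<ge> 0" using Wge by simp
      ultimately have lnx: "ln (W xs x) \<ge> lam * u (z x) (hyp z h0 G xs)" using g0 by simp
      have "ln (W xs x) \<le> (\<Sum>i<n. ln (W xs i))"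
        using xn Wge by (intro member_le_sum) auto
      with lnx have Psi: "(\<Sum>i<n. ln (W xs i)) \<ge> lam * u (z x) (hyp z h0 G xs)" by simp
      have "(1/(1-gam)) * (lam * u (z x) (hyp z h0 G xs)) \<le> (1/(1-gam)) * (\<Sum>i<n. ln (W xs i))"
        using Psi g1 by (intro mult_left_mono) auto
      then have "(\<Sum>t<T. ln (W (take t xs) (xs ! t))) \<le> lam / (1 - gam) * S"
      proof -
        have e: "lam / (1 - gam) * (S + u (z x) (hyp z h0 G xs)) = lam / (1 - gam) * S + (1/(1-gam)) * (lam * u (z x) (hyp z h0 G xs))"
          by (simp add: algebra_simps)
        show ?thesis using pot[unfolded U e] \<open>(1/(1-gam)) * (lam * u (z x) (hyp z h0 G xs)) \<le> _\<close> by linarith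
      qed
      with L1 have "ln (Q / priorP n T xs) \<le> lam / (1 - gam) * S" by simp
      then have "Q * ln (Q / priorP n T xs) \<le> Q * (lam / (1 - gam) * S)"
        using Qp by (intro mult_left_mono) auto
      then show ?thesis using False by (simp add: Q_def S_def)
    qed
  qed
qed

theorem theorem5:
  fixes n T :: nat and z :: "nat \<Rightarrow> 'z" and h0 :: 'h
    and G :: "nat \<Rightarrow> 'h \<Rightarrow> 'z \<Rightarrow> 'h" and u :: "'z \<Rightarrow> 'h \<Rightarrow> real"
    and lam gam :: real
  assumes "\<And>x h. u x h \<ge> 0"
    and "lam \<ge> 0" and "0 < gam" and "gam < 1"
  shows "KL_fin (seqs n T) (postQ n z h0 G u lam gam) (priorP n T)
     \<le> lam / (1 - gam) *
        (\<Sum>t=1..T-1. \<Sum>xs\<in>seqs n T.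
            postQ n z h0 G u lam gam xs * u (z (xs ! (t - 1))) (hyp z h0 G (take t xs)))"
proof -
  have "KL_fin (seqs n T) (postQ n z h0 G u lam gam) (priorP n T)
     \<le> (\<Sum>xs\<in>seqs n T. postQ n z h0 G u lam gam xs * (lam / (1 - gam) *
        (\<Sum>t=1..T-1. u (z (xs ! (t - 1))) (hyp z h0 G (take t xs)))))"
    unfolding KL_fin_def by (rule sum_mono) (rule pointwise[OF assms])
  also have "\<dots> = lam / (1 - gam) *
        (\<Sum>t=1..T-1. \<Sum>xs\<in>seqs n T.
            postQ n z h0 G u lam gam xs * u (z (xs ! (t - 1))) (hyp z h0 G (take t xs)))"
    by (simp add: sum_distrib_left sum.swap[of _ "seqs n T"] algebra_simps)
  finally show ?thesis .
qed

end
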